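(* Let $f$ satisfy conditions (1) and (2b), and let $n\in\mathbb{N}_0$. In the expression \[ 2\pi\int_0^\infty f(r)\,r^{n+1}\sum_{k=0}^\infty(-1)^k\frac{(pr^2)^k}{k!}\,dr \] the order of summation and integration may be reversed, for arbitrary $p\ge0$.
   Context: $f:[0,\infty)\to\mathbb{R}$; $c_n=2\pi\int_0^\infty f(r)\,r^{n+1}dr$. Condition (1): there is a constant $F$ with $0\le f(r)\le F$ for all $r\ge0$, $c_0$ exists and $c_0>0$. Condition (2b): $c_{2n}$ exists for all $n\in\mathbb{N}_0$ and $c_n^{1/n}=o(n^{1/2})$ as $n\to\infty$. *)

theory Defs
  imports "HOL-Analysis.Analysis" "HOL-Library.Landau_Symbols"
begin

definition moment :: "(real \<Rightarrow> real) \<Rightarrow> nat \<Rightarrow> real" where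
  "moment f n = 2 * pi * (LINT r:{0..}|lborel. f r * r ^ (n + 1))"

end

theory Submission
  imports Defs
begin

lemma exp_series_real: "(\<lambda>k. (x::real)^k / fact k) sums exp x"
  using exp_converges[of x] by (simp add: divide_inverse mult.commute)

lemma pow_fact_le_exp:
  assumes "(x::real) \<ge> 0" shows "x^k / fact k \<le> exp x"
proof -
  have "(\<Sum>i\<in>{k}. x^i / fact i) \<le> (\<Sum>i. x^i / fact i)"
    by (rule sum_le_suminf) (use exp_series_real[of x] assms in \<open>auto simp: sums_iff\<close>)
  then show ?thesis using exp_series_real[of x] by (simp add: sums_iff)
qed

lemma moments_integrable:
  fixes f :: "real \<Rightarrow> real"
  assumes bound: "\<And>r. r \<ge> 0 \<Longrightarrow> 0 \<le> f r \<and> f r \<le> F"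
    and even_exist: "\<And>m. set_integrable lborel {0..} (\<lambda>r. f r * r ^ (2 * m + 1))"
  shows "set_integrable lborel {0..} (\<lambda>r. f r * r ^ (m + 1))"
proof (cases "even m")
  case True
  then obtain j where "m = 2*j" by auto
  then show ?thesis using even_exist[of j] by simp
next
  case False
  then obtain j where j: "m = 2*j+1" using oddE by blast
  have i: "set_integrable lborel {0..} (\<lambda>r. f r * r ^ (2*j+1) + f r * r ^ (2*(j+1)+1))"
    using even_exist[of j] even_exist[of "j+1"] by (rule set_integral_add)
  show ?thesis
  proof (rule set_integrable_bound[OF i])
    show "set_borel_measurable lborel {0..} (\<lambda>r. f r * r ^ (m + 1))"
    proof -
      have "set_borel_measurable lborel {0..} (\<lambda>r. f r * r ^ (2*j+1))"
        using borel_measurable_integrable[OF even_exist[of j, unfolded set_integrable_def]]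
        by (simp add: set_borel_measurable_def)
      then have "(\<lambda>r. indicator {0..} r *\<^sub>R (f r * r ^ (2*j+1))) \<in> borel_measurable lborel"
        by (simp add: set_borel_measurable_def)
      then have "(\<lambda>r. indicator {0..} r *\<^sub>R (f r * r ^ (2*j+1)) * r) \<in> borel_measurable lborel"
        by measurable
      moreover have "(\<lambda>r. indicator {0..} r *\<^sub>R (f r * r ^ (2*j+1)) * r) = (\<lambda>r. indicator {0..} r *\<^sub>R (f r * r ^ (m + 1)))"
        by (auto simp: j fun_eq_iff)
      ultimately show ?thesis by (simp add: set_borel_measurable_def)
    qed
    show "AE x in lborel. x \<in> {0..} \<longrightarrow> norm (f x * x ^ (m + 1)) \<le> norm (f x * x ^ (2 * j + 1) + f x * x ^ (2 * (j + 1) + 1))"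
    proof (intro AE_I2 impI)
      fix r :: real assume r: "r \<in> {0..}"
      then have f0: "f r \<ge> 0" using bound by auto
      have "r ^ (2*j+2) \<le> r ^ (2*j+1) + r ^ (2*j+3)"
      proof (cases "r \<le> 1")
        case True
        have "r ^ (2*j+2) \<le> r ^ (2*j+1)" using r True by (intro power_decreasing) auto
        moreover have "r ^ (2*j+3) \<ge> 0" using r by simp
        ultimately show ?thesis by linarith
      next
        case False
        have "r ^ (2*j+2) \<le> r ^ (2*j+3)" using False by (intro power_increasing) auto
        moreover have "r ^ (2*j+1) \<ge> 0" using r by simp
        ultimately show ?thesis by linarith
      qed
      then have "f r * r ^ (2*j+2) \<le> f r * (r ^ (2*j+1) + r ^ (2*j+3))"
        using f0 by (rule mult_left_mono)
      then show "norm (f r * r ^ (m + 1)) \<le> norm (f r * r ^ (2 * j + 1) + f r * r ^ (2 * (j + 1) + 1))"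
        using f0 r by (simp add: j distrib_left numeral_eq_Suc)
    qed
  qed
qed


lemma summable_moments:
  fixes f :: "real \<Rightarrow> real" and n :: nat and p :: real
  assumes mnn: "\<And>m. moment f m \<ge> 0"
    and growth: "(\<lambda>m. moment f m powr (1 / real m)) \<in> o(\<lambda>m. sqrt (real m))"
    and p: "p \<ge> 0"
  shows "summable (\<lambda>k. p ^ k / fact k * moment f (n + 2 * k))"
proof -
  define e2 where "e2 = 1 / (2 * exp 4 * (p + 1))"
  define \<epsilon> where "\<epsilon> = sqrt e2"
  have e2pos: "e2 > 0" using p unfolding e2_def by simp
  have epos: "\<epsilon> > 0" unfolding \<epsilon>_def using e2pos by simp
  have eps2: "\<epsilon>^2 = e2" unfolding \<epsilon>_def using e2pos by simp
  have ex4: "exp (4::real) \<ge> 1" by simp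
  have "1*1 \<le> (2 * exp 4) * (p + 1)" using p ex4 by (intro mult_mono) (use ex4 in linarith)+
  then have e2le: "e2 \<le> 1" unfolding e2_def using p by (simp add: divide_le_eq_1)
  have ele1: "\<epsilon> \<le> 1" unfolding \<epsilon>_def using e2le by simp
  define q where "q = p * e2 * exp 4"
  have q0: "q \<ge> 0" unfolding q_def using p e2pos by simp
  have pp: "p + 1 > 0" using p by simp
  have "q * (2 * (p + 1)) = p * (exp 4 * (2 * (p + 1)) / (2 * exp 4 * (p + 1)))"
    unfolding q_def e2_def by simp
  also have "exp 4 * (2 * (p + 1)) / (2 * exp 4 * (p + 1)) = 1" using pp by simp
  finally have qe: "q = p / (2 * (p + 1))" using pp by (simp add: eq_divide_eq)
  have q1: "q < 1" unfolding qe using p by (simp add: divide_less_eq)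
  from landau_o.smallD[OF growth epos]
  have "eventually (\<lambda>m. norm (moment f m powr (1 / real m)) \<le> \<epsilon> * norm (sqrt (real m))) sequentially"
    by simp
  then obtain N where N: "\<And>m. m \<ge> N \<Longrightarrow> norm (moment f m powr (1 / real m)) \<le> \<epsilon> * norm (sqrt (real m))"
    unfolding eventually_sequentially by blast
  have mb: "moment f m \<le> (\<epsilon> * sqrt (real m)) ^ m" if "m \<ge> N" "m > 0" for m
  proof (cases "moment f m = 0")
    case True then show ?thesis using epos by simp
  next
    case False
    then have mp: "moment f m > 0" using mnn[of m] by simp
    have "moment f m powr (1 / real m) \<le> \<epsilon> * sqrt (real m)"
      using N[OF that(1)] by simp
    then have "(moment f m powr (1 / real m)) ^ m \<le> (\<epsilon> * sqrt (real m)) ^ m"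
      by (intro power_mono) auto
    moreover have "(moment f m powr (1 / real m)) ^ m = moment f m"
      using mp that(2) by (simp add: powr_realpow[symmetric] powr_powr)
    ultimately show ?thesis by simp
  qed
  have bnd: "norm (p ^ k / fact k * moment f (n + 2 * k)) \<le> (fact n * \<epsilon>^n * exp (2 * real n)) * q ^ k"
    if "k \<ge> N + 1" for k
  proof -
    define m where "m = n + 2 * k"
    have mN: "m \<ge> N" "m > 0" using that unfolding m_def by auto
    have "(\<epsilon> * sqrt (real m)) ^ m = \<epsilon>^m * (sqrt (real m) ^ n * real m ^ k)"
    proof -
      have "sqrt (real m) ^ m = sqrt (real m) ^ n * (sqrt (real m)^2) ^ k"
        unfolding m_def by (simp add: power_add power_mult)
      then show ?thesis by (simp add: power_mult_distrib)
    qed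
    have sq: "sqrt (real m) ^ n \<le> real m ^ n"
    proof (intro power_mono)
      show "sqrt (real m) \<le> real m" using mN(2) by (simp add: real_sqrt_le_iff' power2_eq_square)
    qed simp
    have A: "real m ^ n \<le> fact n * exp (real m)"
      using pow_fact_le_exp[of "real m" n] by (simp add: field_simps)
    have B: "real m ^ k / fact k \<le> exp (real m)"
      using pow_fact_le_exp[of "real m" k] by simp
    have "norm (p ^ k / fact k * moment f (n + 2 * k)) = p ^ k / fact k * moment f m"
      using mnn[of m] p unfolding m_def by simp
    also have "\<dots> \<le> p ^ k / fact k * ((\<epsilon> * sqrt (real m)) ^ m)"
      using mb[OF mN] p by (intro mult_left_mono) auto
    also have "\<dots> = \<epsilon>^m * p^k * sqrt (real m) ^ n * (real m ^ k / fact k)"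
      using \<open>(\<epsilon> * sqrt (real m)) ^ m = _\<close> by simp
    also have "\<dots> \<le> \<epsilon>^m * p^k * (fact n * exp (real m)) * exp (real m)"
      using sq A B epos p by (intro mult_mono order.trans[OF sq A]) auto
    also have "\<dots> = fact n * \<epsilon>^n * (\<epsilon>^2)^k * p^k * exp (real m) ^ 2"
      unfolding m_def by (simp add: power_add power_mult power2_eq_square)
    also have "exp (real m) ^ 2 = exp (2 * real n) * exp 4 ^ k"
      unfolding m_def by (simp add: exp_of_nat_mult[symmetric] exp_add[symmetric] power2_eq_square
          algebra_simps)
    finally show ?thesis unfolding q_def eps2 by (simp add: power_mult_distrib algebra_simps)
  qed
  show ?thesis
    by (rule summable_comparison_test'[OF summable_mult[OF summable_geometric[of q]] bnd])
       (use q0 q1 in auto)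
qed


theorem lemma7:
  fixes f :: "real \<Rightarrow> real" and F :: real and n :: nat and p :: real
  assumes bound: "\<And>r. r \<ge> 0 \<Longrightarrow> 0 \<le> f r \<and> f r \<le> F"
    and c0_exists: "set_integrable lborel {0..} (\<lambda>r. f r * r)"
    and c0_pos: "moment f 0 > 0"
    and even_exist: "\<And>m. set_integrable lborel {0..} (\<lambda>r. f r * r ^ (2 * m + 1))"
    and growth: "(\<lambda>m. moment f m powr (1 / real m)) \<in> o(\<lambda>m. sqrt (real m))"
    and p: "p \<ge> 0"
  shows "(\<forall>k. set_integrable lborel {0..}
            (\<lambda>r. f r * r ^ (n + 1) * ((-1) ^ k * (p * r\<^sup>2) ^ k / fact k)))
    \<and> set_integrable lborel {0..}
            (\<lambda>r. f r * r ^ (n + 1) * (\<Sum>k. (-1) ^ k * (p * r\<^sup>2) ^ k / fact k))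
    \<and> (\<lambda>k. 2 * pi * (LINT r:{0..}|lborel. f r * r ^ (n + 1) * ((-1) ^ k * (p * r\<^sup>2) ^ k / fact k)))
        sums (2 * pi * (LINT r:{0..}|lborel. f r * r ^ (n + 1) * (\<Sum>k. (-1) ^ k * (p * r\<^sup>2) ^ k / fact k)))"
proof -
  define I where "I m = (LINT r:{0..}|lborel. f r * r ^ (m + 1))" for m
  have mint: "set_integrable lborel {0..} (\<lambda>r. f r * r ^ (m + 1))" for m
    by (rule moments_integrable[OF bound even_exist])
  have I0: "I m \<ge> 0" for m
    unfolding I_def set_lebesgue_integral_def
    by (intro integral_nonneg_AE AE_I2) (auto simp: indicator_def bound)
  have mom: "moment f m = 2 * pi * I m" for m unfolding moment_def I_def by simp
  have mnn: "moment f m \<ge> 0" for m using I0[of m] unfolding mom by simp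
  have sm: "summable (\<lambda>k. p ^ k / fact k * moment f (n + 2 * k))"
    by (rule summable_moments[OF mnn growth p])
  have smI: "summable (\<lambda>k. p ^ k / fact k * I (n + 2 * k))"
  proof -
    have "summable (\<lambda>k. (1 / (2 * pi)) * (p ^ k / fact k * moment f (n + 2 * k)))"
      by (rule summable_mult[OF sm])
    then show ?thesis by (simp add: mom)
  qed
  define S where "S k r = f r * r ^ (n + 1) * ((-1) ^ k * (p * r\<^sup>2) ^ k / fact k)" for k r
  define g where "g k r = indicator {0..} r *\<^sub>R S k r" for k r
  have Sid: "S k r = ((-1) ^ k * p ^ k / fact k) * (f r * r ^ (n + 2 * k + 1))" for k r
    unfolding S_def by (simp add: power_mult_distrib power_add power_mult)
  have Sint: "set_integrable lborel {0..} (S k)" for k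
  proof -
    have "set_integrable lborel {0..} (\<lambda>r. ((-1) ^ k * p ^ k / fact k) * (f r * r ^ (n + 2 * k + 1)))"
      using mint[of "n + 2 * k"] by (intro set_integrable_mult_right) auto
    then show ?thesis by (simp add: Sid[abs_def])
  qed
  have gint: "integrable lborel (g k)" for k
    using Sint[of k] unfolding set_integrable_def g_def[abs_def] .
  have gnorm: "norm (g k r) = (p ^ k / fact k) * (indicator {0..} r * (f r * r ^ (n + 2 * k + 1)))" for k r
    using bound[of r] p unfolding g_def Sid by (auto simp: indicator_def abs_mult)
  have gnormI: "(\<integral>r. norm (g k r) \<partial>lborel) = p ^ k / fact k * I (n + 2 * k)" for k
    unfolding gnorm I_def set_lebesgue_integral_def by simp
  have gnorm2: "norm (g k r) = \<bar>indicator {0..} r * (f r * r ^ (n + 1))\<bar> * (\<bar>p * r\<^sup>2\<bar> ^ k / fact k)" for k r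
    unfolding g_def S_def by (simp add: abs_mult power_abs)
  have AEs: "AE r in lborel. summable (\<lambda>k. norm (g k r))"
  proof (intro AE_I2)
    fix r :: real
    show "summable (\<lambda>k. norm (g k r))"
      unfolding gnorm2 using exp_series_real[of "\<bar>p * r\<^sup>2\<bar>"]
      by (intro summable_mult) (auto simp: sums_iff)
  qed
  have sI: "summable (\<lambda>k. \<integral>r. norm (g k r) \<partial>lborel)"
    unfolding gnormI by (rule smI)
  have sumg: "(\<Sum>k. g k r) = indicator {0..} r * (f r * r ^ (n + 1) * (\<Sum>k. (-1) ^ k * (p * r\<^sup>2) ^ k / fact k))" for r
  proof -
    have "summable (\<lambda>k. (-1) ^ k * (p * r\<^sup>2) ^ k / fact k)"
      using exp_series_real[of "- (p * r\<^sup>2)"] unfolding power_minus[of "p * r\<^sup>2"]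
      by (simp add: sums_iff)
    then have "(\<lambda>k. (indicator {0..} r * (f r * r ^ (n + 1))) * ((-1) ^ k * (p * r\<^sup>2) ^ k / fact k)) sums
       ((indicator {0..} r * (f r * r ^ (n + 1))) * (\<Sum>k. (-1) ^ k * (p * r\<^sup>2) ^ k / fact k))"
      by (intro sums_mult summable_sums)
    then show ?thesis unfolding g_def S_def by (simp add: sums_iff mult.assoc)
  qed
  have I1: "integrable lborel (\<lambda>x. \<Sum>k. g k x)"
    by (rule integrable_suminf[OF gint AEs sI])
  have I2: "(\<lambda>k. integral\<^sup>L lborel (g k)) sums (\<integral>x. (\<Sum>k. g k x) \<partial>lborel)"
    by (rule sums_integral[OF gint AEs sI])
  show ?thesis
  proof (intro conjI allI)
    fix k show "set_integrable lborel {0..} (\<lambda>r. f r * r ^ (n + 1) * ((-1) ^ k * (p * r\<^sup>2) ^ k / fact k))"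
      using Sint[of k] unfolding S_def .
  next
    show "set_integrable lborel {0..} (\<lambda>r. f r * r ^ (n + 1) * (\<Sum>k. (-1) ^ k * (p * r\<^sup>2) ^ k / fact k))"
      using I1 unfolding sumg set_integrable_def by simp
  next
    show "(\<lambda>k. 2 * pi * (LINT r:{0..}|lborel. f r * r ^ (n + 1) * ((-1) ^ k * (p * r\<^sup>2) ^ k / fact k)))
        sums (2 * pi * (LINT r:{0..}|lborel. f r * r ^ (n + 1) * (\<Sum>k. (-1) ^ k * (p * r\<^sup>2) ^ k / fact k)))"
      using sums_mult[OF I2, of "2 * pi"] unfolding sumg
      by (simp add: set_lebesgue_integral_def g_def[abs_def] S_def[abs_def])
  qed
qed

end
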